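(* Let $T_1=(Q_1,\Sigma,\Delta,R_1,q_1^0)$ and $T_2=(Q_2,\Delta,\Omega,R_2,q_2^0)$ be top-down tree transducers, let $\hat{T}_1$ be the product construction of $T_1$ and the domain automaton of $T_2$, and let $M$ be the look-ahead transducer constructed from $T_1$ and $T_2$ as described in the context. Let $(q_1,S)$ be a state of $\hat{T}_1$ and $q_2$ a state of $T_2$ with $q_2\in S$. Then for the state $(q_1,S,q_2)$ of $M$, $\text{dom}((q_1,S,q_2))=\text{dom}((q_1,S))$.
   Context: A top-down tree transducer $T=(Q,\Sigma,\Delta,R,q_0)$ has finite state set $Q$, ranked input/output alphabets $\Sigma,\Delta$, initial state $q_0$, and finite rule set $R$ of rules $q(a(x_1,\dots,x_k))\to t$ with $a\in\Sigma_k$ ($\Sigma_k$ = symbols of rank $k$) and $t$ a tree over $\Delta$ whose leaves may additionally be of the form $q'(x_i)$, $q'\in Q$, $i\in[k]$; rules are used as rewrite rules in the usual way; for a state $q$ (of a transducer, with or without look-ahead), $\text{dom}(q)$ is the set of input trees $s$ on which $q$ produces at least one output tree (containing no states). For $q\in Q$, $a\in\Sigma_k$, $\text{rhs}_T(q,a)$ is the set of right-hand sides of rules with left-hand side $q(a(x_1,\dots,x_k))$; for a right-hand side $\xi$ (resp. a set $\Gamma$ of right-hand sides), $\xi[x_i]$ (resp. $\Gamma[x_i]$) is the set of states $q'$ such that $q'(x_i)$ occurs in $\xi$ (resp. in some tree of $\Gamma$). Domain automaton of $T$: the top-down tree automaton (transducer over $\Sigma$ with rules of the form $p(a(x_1,\dots,x_k))\to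 a(p_1(x_1),\dots,p_k(x_k))$) with states all subsets of $Q$, initial state $\{q_0\}$, rules $S(a(x_1,\dots,x_k))\to a(S_1(x_1),\dots,S_k(x_k))$ for every $a\in\Sigma_k$, nonempty $S=\{q_1,\dots,q_n\}\subseteq Q$ and nonempty $\Gamma_j\subseteq\text{rhs}_T(q_j,a)$ ($j\in[n]$), where $S_i=\bigcup_j\Gamma_j[x_i]$, and rules $\emptyset(a(x_1,\dots,x_k))\to a(\emptyset(x_1),\dots,\emptyset(x_k))$ for all $a$; for an automaton state $l$, $\text{dom}(l)$ is the set of trees accepted from $l$. Product construction of transducers $T=(Q,\Sigma,\Delta,R,q_0)$ and $T'=(Q',\Delta,\Omega,R',q'_0)$: the transducer with states $Q\times Q'$, initial state $(q_0,q'_0)$, and, for every rule $q(a(x_1,\dots,x_k))\to\xi$ of $T$, every $p\in Q'$ and every tree $\zeta$ derivable from $p(\xi)$ using rules of $T'$ in which the leaves of $\xi$ of the form $q''(x_i)$ are treated as unrewritable symbols and a state $p'$ applied to such a leaf stays as $p'(q''(x_i))$, the rule $(q,p)(a(x_1,\dots,x_k))\to\zeta'$ (said to be obtained from the rule $q(a(x_1,\dots,x_k))\to\xi$ by translating $\xi$ with $p$), where $\zeta'$ replaces each $p'(q''(x_i))$ by $(q'',p')(x_i)$. A top-down tree transducer with look-ahead is a tuple $(Q,\Sigma,\Delta,R,q_0,B)$ where $B$ is a top-down tree automaton over $\Sigma$ with state set $L$ and rules have the form $q(a(x_1\!:\!l_1,\dots,x_k\!:\!l_k))\to t$ with $l_i\in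 L$; on input $s$, each node $v$ with label $a\in\Sigma_k$ is first relabeled by $\langle a,l_1,\dots,l_k\rangle$ where $l_i\in L$ are such that the $i$-th subtree of $v$ is in $\text{dom}(l_i)$, and the relabeled tree is then processed reading each rule as $q(\langle a,l_1,\dots,l_k\rangle(x_1,\dots,x_k))\to t$. Construction of $M$: let $\hat{T}_1$ be the product construction of $T_1$ and the domain automaton of $T_2$ (states written $(q,S)$ with $q\in Q_1$, $S\subseteq Q_2$), and $N$ the product construction of $\hat{T}_1$ and $T_2$ (states written $(q,S,q')$). The states of $M$ are the $(q,S,q')$ with $q'\in S$; its initial state is $(q_1^0,\{q_2^0\},q_2^0)$; its look-ahead automaton is the domain automaton $\hat{A}$ of $\hat{T}_1$. For every rule $(q,S,q')(a(x_1,\dots,x_k))\to\gamma$ of $N$ involving only such states, obtained from the rule $(q,S)(a(x_1,\dots,x_k))\to\xi$ of $\hat{T}_1$ by translating $\xi$ with $q'$, and for all states $l_1,\dots,l_k$ of $\hat{A}$ with $\xi[x_i]\subseteq l_i$ ($i\in[k]$), $M$ has the rule $(q,S,q')(a(x_1\!:\!l_1,\dots,x_k\!:\!l_k))\to\gamma$. *)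

theory Defs
  imports Main
begin

datatype ('f, 'v) tm = Fun 'f "('f, 'v) tm list" | Var 'v

fun wf_tree :: "('f \<times> nat) set \<Rightarrow> ('f, 'v) tm \<Rightarrow> bool" where
  "wf_tree \<Sigma> (Fun a ts) = ((a, length ts) \<in> \<Sigma> \<and> (\<forall>t\<in>set ts. wf_tree \<Sigma> t))"
| "wf_tree \<Sigma> (Var v) = False"

definition ground :: "('f, 'v) tm \<Rightarrow> bool" where
  "ground t \<longleftrightarrow> set2_tm t = {}"

text \<open>A right-hand side is a tree over the output alphabet whose leaves may be
  \<open>Var (q', i)\<close>, standing for \<open>q'(x_i)\<close>; the variable index \<open>i\<close> is 0-based
  (i.e. \<open>x_1,\<dots>,x_k\<close> are \<open>0,\<dots>,k-1\<close>).  A rule \<open>(q, (a,k), \<xi>)\<close> stands for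
  \<open>q(a(x_1,\<dots>,x_k)) \<rightarrow> \<xi>\<close>.\<close>

record ('q, 'f, 'g) td =
  states :: "'q set"
  inalph :: "('f \<times> nat) set"
  outalph :: "('g \<times> nat) set"
  rules :: "('q \<times> ('f \<times> nat) \<times> ('g, 'q \<times> nat) tm) set"
  init :: 'q

fun wf_rhs :: "('g \<times> nat) set \<Rightarrow> 'q set \<Rightarrow> nat \<Rightarrow> ('g, 'q \<times> nat) tm \<Rightarrow> bool" where
  "wf_rhs \<Delta> Q k (Fun g ts) = ((g, length ts) \<in> \<Delta> \<and> (\<forall>t\<in>set ts. wf_rhs \<Delta> Q k t))"
| "wf_rhs \<Delta> Q k (Var (q, i)) = (q \<in> Q \<and> i < k)"

definition wf_td :: "('q, 'f, 'g) td \<Rightarrow> bool" where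
  "wf_td T \<longleftrightarrow> finite (states T) \<and> finite (inalph T) \<and> finite (outalph T)
     \<and> finite (rules T) \<and> init T \<in> states T
     \<and> (\<forall>(q, (a, k), \<xi>) \<in> rules T. q \<in> states T \<and> (a, k) \<in> inalph T
            \<and> wf_rhs (outalph T) (states T) k \<xi>)"

text \<open>Sentential forms are trees over the output alphabet whose leaves may
  be \<open>Var (q, s)\<close>, standing for \<open>q(s)\<close> with \<open>s\<close> an input tree (which may itself contain
  leaves \<open>Var v\<close>; these are not rewritable).\<close>

definition inst :: "('g, 'q \<times> nat) tm \<Rightarrow> ('f, 'v) tm list \<Rightarrow> ('g, 'q \<times> ('f, 'v) tm) tm" where
  "inst \<xi> ss = map_tm id (\<lambda>(q', i). (q', ss ! i)) \<xi>"

inductive tstep :: "('q \<times> ('f \<times> nat) \<times> ('g, 'q \<times> nat) tm) set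
     \<Rightarrow> ('g, 'q \<times> ('f, 'v) tm) tm \<Rightarrow> ('g, 'q \<times> ('f, 'v) tm) tm \<Rightarrow> bool"
  for R where
  root: "(q, (a, length ss), \<xi>) \<in> R \<Longrightarrow> tstep R (Var (q, Fun a ss)) (inst \<xi> ss)"
| ctxt: "i < length ts \<Longrightarrow> tstep R (ts ! i) t' \<Longrightarrow> tstep R (Fun g ts) (Fun g (ts[i := t']))"

text \<open>\<open>dom(q)\<close>: input trees on which \<open>q\<close> produces at least one output tree (without states).\<close>

definition td_dom :: "('q, 'f, 'g) td \<Rightarrow> 'q \<Rightarrow> ('f, 'v) tm set" where
  "td_dom T q = {s. wf_tree (inalph T) s \<and>
      (\<exists>t. ground t \<and> (tstep (rules T))\<^sup>*\<^sup>* (Var (q, s)) t)}"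

definition rhs_set :: "('q, 'f, 'g) td \<Rightarrow> 'q \<Rightarrow> ('f \<times> nat) \<Rightarrow> ('g, 'q \<times> nat) tm set" where
  "rhs_set T q a = {\<xi>. (q, a, \<xi>) \<in> rules T}"

definition rhs_states :: "('g, 'q \<times> nat) tm \<Rightarrow> nat \<Rightarrow> 'q set" where
  "rhs_states \<xi> i = {q'. (q', i) \<in> set2_tm \<xi>}"

definition domaut :: "('q, 'f, 'g) td \<Rightarrow> ('q set, 'f, 'f) td" where
  "domaut T = \<lparr> states = Pow (states T), inalph = inalph T, outalph = inalph T,
     rules =
       {(S, (a, k), Fun a (map (\<lambda>i. Var ({q'. \<exists>q\<in>S. \<exists>\<xi>\<in>\<Gamma> q. q' \<in> rhs_states \<xi> i}, i)) [0..<k]))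
         | S a k \<Gamma>. (a, k) \<in> inalph T \<and> S \<noteq> {} \<and> S \<subseteq> states T
             \<and> (\<forall>q\<in>S. \<Gamma> q \<noteq> {} \<and> \<Gamma> q \<subseteq> rhs_set T q (a, k))}
       \<union> {({}, (a, k), Fun a (map (\<lambda>i. Var ({}, i)) [0..<k])) | a k. (a, k) \<in> inalph T},
     init = {init T} \<rparr>"

text \<open>Translating a right-hand side \<open>\<xi>\<close> of \<open>T\<close> with a state \<open>p\<close> of \<open>T'\<close>: all trees
  \<open>\<zeta>\<close> derivable from \<open>p(\<xi>)\<close> in which every remaining state occurrence is of the form
  \<open>p'(q''(x_i))\<close>, with \<open>p'(q''(x_i))\<close> then replaced by \<open>(q'',p')(x_i)\<close>.\<close>

definition translate :: "('p, 'g, 'h) td \<Rightarrow> 'p \<Rightarrow> ('g, 'q \<times> nat) tm \<Rightarrow> ('h, ('q \<times> 'p) \<times> nat) tm set" where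
  "translate T' p \<xi> =
     {map_tm id (\<lambda>(p', u). case u of Var (q'', i) \<Rightarrow> ((q'', p'), i) | Fun _ _ \<Rightarrow> undefined) \<zeta>
       | \<zeta>. (tstep (rules T'))\<^sup>*\<^sup>* (Var (p, \<xi>)) \<zeta> \<and> (\<forall>(p', u) \<in> set2_tm \<zeta>. \<exists>q'' i. u = Var (q'', i))}"

definition prod_td :: "('q, 'f, 'g) td \<Rightarrow> ('p, 'g, 'h) td \<Rightarrow> ('q \<times> 'p, 'f, 'h) td" where
  "prod_td T T' = \<lparr> states = states T \<times> states T', inalph = inalph T, outalph = outalph T',
     rules = {((q, p), a, \<zeta>') | q a \<xi> p \<zeta>'. (q, a, \<xi>) \<in> rules T \<and> p \<in> states T'
                                      \<and> \<zeta>' \<in> translate T' p \<xi>},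
     init = (init T, init T') \<rparr>"

text \<open>A rule \<open>(q, ((a, ls), k), t)\<close> stands for \<open>q(a(x_1:l_1,\<dots>,x_k:l_k)) \<rightarrow> t\<close> where
  \<open>ls = [l_1,\<dots>,l_k]\<close>.  The look-ahead automaton is a top-down tree automaton,
  represented as a transducer over \<open>\<Sigma>\<close>.\<close>

record ('q, 'f, 'g, 'l) tdla =
  lstates :: "'q set"
  linalph :: "('f \<times> nat) set"
  loutalph :: "('g \<times> nat) set"
  lrules :: "('q \<times> (('f \<times> 'l list) \<times> nat) \<times> ('g, 'q \<times> nat) tm) set"
  linit :: 'q
  lookahead :: "('l, 'f, 'f) td"

inductive relab :: "('l, 'f, 'f) td \<Rightarrow> ('f, 'v) tm \<Rightarrow> ('f \<times> 'l list, 'v) tm \<Rightarrow> bool"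
  for B where
  "length ls = length ss \<Longrightarrow> (\<forall>i<length ss. ls ! i \<in> states B \<and> ss ! i \<in> td_dom B (ls ! i))
   \<Longrightarrow> list_all2 (relab B) ss ss' \<Longrightarrow> relab B (Fun a ss) (Fun (a, ls) ss')"

definition la_base :: "('q, 'f, 'g, 'l) tdla \<Rightarrow> ('q, 'f \<times> 'l list, 'g) td" where
  "la_base M = \<lparr> states = lstates M,
     inalph = {((a, ls), k) | a ls k. (a, k) \<in> linalph M \<and> length ls = k
                                       \<and> set ls \<subseteq> states (lookahead M)},
     outalph = loutalph M, rules = lrules M, init = linit M \<rparr>"

definition la_dom :: "('q, 'f, 'g, 'l) tdla \<Rightarrow> 'q \<Rightarrow> ('f, 'v) tm set" where
  "la_dom M q = {s. wf_tree (linalph M) s \<and>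
      (\<exists>s'. relab (lookahead M) s s' \<and> s' \<in> td_dom (la_base M) q)}"

definition constrM :: "('q1, 'f, 'g) td \<Rightarrow> ('q2, 'g, 'h) td
    \<Rightarrow> (('q1 \<times> 'q2 set) \<times> 'q2, 'f, 'h, ('q1 \<times> 'q2 set) set) tdla" where
  "constrM T1 T2 = (let T1h = prod_td T1 (domaut T2); A = domaut T1h in
     \<lparr> lstates = {((q, S), q'). (q, S) \<in> states T1h \<and> q' \<in> states T2 \<and> q' \<in> S},
       linalph = inalph T1, loutalph = outalph T2,
       lrules = {(((q, S), q'), ((a, ls), k), \<gamma>) | q S q' a ls k \<xi> \<gamma>.
                   ((q, S), (a, k), \<xi>) \<in> rules T1h \<and> q' \<in> states T2 \<and> q' \<in> S
                   \<and> \<gamma> \<in> translate T2 q' \<xi>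
                   \<and> (\<forall>(((q0, S0), p0), i) \<in> set2_tm \<gamma>. p0 \<in> S0)
                   \<and> length ls = k
                   \<and> (\<forall>i<k. ls ! i \<in> states A \<and> rhs_states \<xi> i \<subseteq> ls ! i)},
       linit = ((init T1, {init T2}), init T2),
       lookahead = A \<rparr>)"

end

theory Submission
  imports Defs
begin

lemma set2_inst: "set2_tm (inst \<xi> ss) = (\<lambda>(q', i). (q', ss ! i)) ` set2_tm \<xi>"
  by (simp add: inst_def tm.set_map)

lemma tstep_Var_Var: "tstep R (Var (q, Var v)) t \<Longrightarrow> False"
  by (cases rule: tstep.cases) auto

lemma rtranclp_Var_Var: "(tstep R)\<^sup>*\<^sup>* (Var (q, Var v)) t \<Longrightarrow> t = Var (q, Var v)"
  by (induct rule: rtranclp_induct) (auto dest: tstep_Var_Var)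

lemma tstep_FunE: "tstep R (Fun g ts) t \<Longrightarrow> \<exists>i t'. i < length ts \<and> tstep R (ts ! i) t' \<and> t = Fun g (ts[i := t'])"
  by (cases rule: tstep.cases) auto

lemma rtranclp_Fun: "(tstep R)\<^sup>*\<^sup>* (Fun g ts) t \<Longrightarrow> \<exists>ts'. t = Fun g ts' \<and> list_all2 (tstep R)\<^sup>*\<^sup>* ts ts'"
proof (induct rule: rtranclp_induct)
  case base
  have "list_all2 (tstep R)\<^sup>*\<^sup>* ts ts" by (simp add: list_all2_conv_all_nth)
  then show ?case by blast
next
  case (step y z)
  obtain ts' where y: "y = Fun g ts'" and l: "list_all2 (tstep R)\<^sup>*\<^sup>* ts ts'" using step(3) by blast
  from step(2) y have "tstep R (Fun g ts') z" by simp
  then have "\<exists>i t'. i < length ts' \<and> tstep R (ts' ! i) t' \<and> z = Fun g (ts'[i := t'])"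
    by (rule tstep_FunE)
  then obtain i t' where i: "i < length ts'" "tstep R (ts' ! i) t'" "z = Fun g (ts'[i := t'])"
    by blast
  have len: "length ts = length ts'" using l by (rule list_all2_lengthD)
  have "list_all2 (tstep R)\<^sup>*\<^sup>* ts (ts'[i := t'])"
    unfolding list_all2_conv_all_nth
  proof (intro conjI allI impI)
    show "length ts = length (ts'[i := t'])" using len by simp
    fix j assume j: "j < length ts"
    have lj: "(tstep R)\<^sup>*\<^sup>* (ts ! j) (ts' ! j)" using l j by (simp add: list_all2_conv_all_nth)
    show "(tstep R)\<^sup>*\<^sup>* (ts ! j) (ts'[i := t'] ! j)"
    proof (cases "j = i")
      case True
      then have "ts'[i := t'] ! j = t'" using i(1) by simp
      then show ?thesis using lj i(2) True by (metis rtranclp.rtrancl_into_rtrancl)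
    next
      case False
      then have "ts'[i := t'] ! j = ts' ! j" by simp
      then show ?thesis using lj by simp
    qed
  qed
  then show ?case using i by blast
qed

lemma rtranclp_ctxt1: "(tstep R)\<^sup>*\<^sup>* t t' \<Longrightarrow> i < length ts \<Longrightarrow>
   (tstep R)\<^sup>*\<^sup>* (Fun g (ts[i := t])) (Fun g (ts[i := t']))"
proof (induct rule: rtranclp_induct)
  case base then show ?case by simp
next
  case (step y z)
  have "tstep R (Fun g (ts[i := y])) (Fun g ((ts[i := y])[i := z]))"
    by (rule tstep.ctxt) (use step in auto)
  then show ?case using step by auto
qed

lemma rtranclp_Fun_lift_aux: "list_all2 (tstep R)\<^sup>*\<^sup>* ts ts' \<Longrightarrow>
   (tstep R)\<^sup>*\<^sup>* (Fun g (pre @ ts)) (Fun g (pre @ ts'))"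
proof (induct ts arbitrary: ts' pre)
  case Nil then show ?case by simp
next
  case (Cons x xs)
  then obtain y ys where ts': "ts' = y # ys" "(tstep R)\<^sup>*\<^sup>* x y" "list_all2 (tstep R)\<^sup>*\<^sup>* xs ys"
    by (cases ts') auto
  have "(tstep R)\<^sup>*\<^sup>* (Fun g ((pre @ x # xs)[length pre := x])) (Fun g ((pre @ x # xs)[length pre := y]))"
    by (rule rtranclp_ctxt1) (use ts' in auto)
  then have 1: "(tstep R)\<^sup>*\<^sup>* (Fun g (pre @ x # xs)) (Fun g (pre @ y # xs))" by simp
  have "(tstep R)\<^sup>*\<^sup>* (Fun g ((pre @ [y]) @ xs)) (Fun g ((pre @ [y]) @ ys))"
    using Cons ts' by blast
  then show ?case using 1 ts' by simp
qed

lemma rtranclp_Fun_lift: "list_all2 (tstep R)\<^sup>*\<^sup>* ts ts' \<Longrightarrow> (tstep R)\<^sup>*\<^sup>* (Fun g ts) (Fun g ts')"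
  using rtranclp_Fun_lift_aux[of R ts ts' g "[]"] by simp

lemma list_choice: "\<forall>x\<in>set xs. \<exists>y. P x y \<Longrightarrow> \<exists>ys. list_all2 P xs ys"
  by (induct xs) auto

lemma lift: "(\<forall>v\<in>set2_tm t. \<exists>t'. (tstep R)\<^sup>*\<^sup>* (Var v) t' \<and> set2_tm t' \<subseteq> A) \<Longrightarrow>
   \<exists>t'. (tstep R)\<^sup>*\<^sup>* t t' \<and> set2_tm t' \<subseteq> A"
proof (induct t)
  case (Fun g ts)
  then have "\<forall>x\<in>set ts. \<exists>y. (tstep R)\<^sup>*\<^sup>* x y \<and> set2_tm y \<subseteq> A" by auto
  then obtain ys where l: "list_all2 (\<lambda>x y. (tstep R)\<^sup>*\<^sup>* x y \<and> set2_tm y \<subseteq> A) ts ys"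
    by (rule list_choice[THEN exE]) blast
  then have "list_all2 (tstep R)\<^sup>*\<^sup>* ts ys" by (rule list_all2_mono) auto
  then have "(tstep R)\<^sup>*\<^sup>* (Fun g ts) (Fun g ys)" by (rule rtranclp_Fun_lift)
  moreover have "set2_tm (Fun g ys) \<subseteq> A" using l
    by (fastforce simp: list_all2_conv_all_nth in_set_conv_nth)
  ultimately show ?case by blast
qed auto

lemma decomp: "(tstep R)\<^sup>*\<^sup>* t t' \<Longrightarrow> v \<in> set2_tm t \<Longrightarrow>
   \<exists>t''. (tstep R)\<^sup>*\<^sup>* (Var v) t'' \<and> set2_tm t'' \<subseteq> set2_tm t'"
proof (induct t arbitrary: t')
  case (Fun g ts)
  obtain ts' where t': "t' = Fun g ts'" and l: "list_all2 (tstep R)\<^sup>*\<^sup>* ts ts'"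
    using rtranclp_Fun[OF Fun(2)] by auto
  from Fun(3) obtain i where i: "i < length ts" "v \<in> set2_tm (ts ! i)"
    by (auto simp: in_set_conv_nth)
  have "(tstep R)\<^sup>*\<^sup>* (ts ! i) (ts' ! i)" "i < length ts'" using l i by (auto simp: list_all2_conv_all_nth)
  then obtain t'' where "(tstep R)\<^sup>*\<^sup>* (Var v) t''" "set2_tm t'' \<subseteq> set2_tm (ts' ! i)"
    using Fun(1)[of "ts ! i" "ts' ! i"] i by auto
  moreover have "set2_tm (ts' ! i) \<subseteq> set2_tm t'" using t' \<open>i < length ts'\<close> nth_mem by fastforce
  ultimately show ?case by blast
qed auto

lemma root_decomp: "(tstep R)\<^sup>*\<^sup>* (Var (q, Fun a ss)) t \<Longrightarrow>
   t = Var (q, Fun a ss) \<or> (\<exists>\<xi>. (q, (a, length ss), \<xi>) \<in> R \<and> (tstep R)\<^sup>*\<^sup>* (inst \<xi> ss) t)"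
  by (erule converse_rtranclpE) (auto elim!: tstep.cases)

lemma inv_step: "tstep R t t' \<Longrightarrow> \<forall>(q, (a, k), \<xi>) \<in> R. \<forall>(p, j) \<in> set2_tm \<xi>. j < k \<Longrightarrow>
   \<forall>(p, u) \<in> set2_tm t. set2_tm u \<subseteq> B \<Longrightarrow> \<forall>(p, u) \<in> set2_tm t'. set2_tm u \<subseteq> B"
proof (induct rule: tstep.induct)
  case (root q a ss \<xi>)
  have B: "set2_tm (Fun a ss) \<subseteq> B" using root.prems(2) by simp
  have lt: "\<forall>x\<in>set2_tm \<xi>. case x of (p, j) \<Rightarrow> j < length ss"
    using root.prems(1) root.hyps by fastforce
  show ?case
  proof (intro ballI, clarify)
    fix p u x assume "(p, u) \<in> set2_tm (inst \<xi> ss)" "x \<in> set2_tm u"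
    then obtain j where j: "(p, j) \<in> set2_tm \<xi>" "u = ss ! j" by (auto simp: set2_inst)
    then have "j < length ss" using lt by fastforce
    then have "set2_tm u \<subseteq> set2_tm (Fun a ss)" using j nth_mem by fastforce
    then show "x \<in> B" using B \<open>x \<in> set2_tm u\<close> by blast
  qed
next
  case (ctxt i ts t' g)
  have IH: "\<forall>(p, u) \<in> set2_tm t'. set2_tm u \<subseteq> B"
    using ctxt.hyps(3) ctxt.prems ctxt.hyps(1) nth_mem by fastforce
  show ?case
  proof (intro ballI, clarify)
    fix p u x assume pu: "(p, u) \<in> set2_tm (Fun g (ts[i := t']))" "x \<in> set2_tm u"
    then obtain s where s: "s \<in> set (ts[i := t'])" "(p, u) \<in> set2_tm s" by auto
    then have "s = t' \<or> s \<in> set ts" using set_update_subset_insert[of ts i t'] by blast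
    then show "x \<in> B"
    proof
      assume "s = t'" then show ?thesis using IH s pu by fastforce
    next
      assume "s \<in> set ts" then show ?thesis using ctxt.prems(2) s pu by fastforce
    qed
  qed
qed

lemma inv_steps: "(tstep R)\<^sup>*\<^sup>* t t' \<Longrightarrow> \<forall>(q, (a, k), \<xi>) \<in> R. \<forall>(p, j) \<in> set2_tm \<xi>. j < k \<Longrightarrow>
   \<forall>(p, u) \<in> set2_tm t. set2_tm u \<subseteq> B \<Longrightarrow> \<forall>(p, u) \<in> set2_tm t'. set2_tm u \<subseteq> B"
proof (induct rule: rtranclp_induct)
  case (step y z)
  then show ?case using inv_step[of R y z B] by blast
qed auto

lemma wf_rhs_set: "wf_rhs \<Delta> Q k \<xi> \<Longrightarrow> (p, j) \<in> set2_tm \<xi> \<Longrightarrow> p \<in> Q \<and> j < k"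
  by (induct \<xi> rule: wf_rhs.induct) auto

lemma td_dom_iff: "s \<in> td_dom T q \<longleftrightarrow> wf_tree (inalph T) s \<and>
   (\<exists>t. (tstep (rules T))\<^sup>*\<^sup>* (Var (q, s)) t \<and> set2_tm t = {})"
  by (auto simp: td_dom_def ground_def)


lemma domaut_simps[simp]: "inalph (domaut T) = inalph T" "states (domaut T) = Pow (states T)"
  "outalph (domaut T) = inalph T"
  by (simp_all add: domaut_def)

lemma domaut_rule: "(L, (a, k), rhs) \<in> rules (domaut T) \<longleftrightarrow> (a, k) \<in> inalph T \<and>
   ((L = {} \<and> rhs = Fun a (map (\<lambda>i. Var ({}, i)) [0..<k])) \<or>
    (\<exists>\<Gamma>. L \<noteq> {} \<and> L \<subseteq> states T \<and> (\<forall>q\<in>L. \<Gamma> q \<noteq> {} \<and> \<Gamma> q \<subseteq> rhs_set T q (a, k)) \<and>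
       rhs = Fun a (map (\<lambda>i. Var ({q'. \<exists>q\<in>L. \<exists>\<xi>\<in>\<Gamma> q. q' \<in> rhs_states \<xi> i}, i)) [0..<k])))"
  unfolding domaut_def by auto

lemma DA_sound:
  assumes wfR: "\<forall>(q, (a, k), \<xi>) \<in> rules T. \<forall>(p, j) \<in> set2_tm \<xi>. j < k"
  shows "s \<in> td_dom (domaut T) L \<Longrightarrow> p \<in> L \<Longrightarrow> (s :: ('f, 'v) tm) \<in> td_dom T p"
proof (induct s arbitrary: L p)
  case (Var v) then show ?case by (simp add: td_dom_iff)
next
  case (Fun a ss)
  let ?k = "length ss"
  from Fun.prems(1) have wf: "wf_tree (inalph T) (Fun a ss)"
    and "\<exists>t. (tstep (rules (domaut T)))\<^sup>*\<^sup>* (Var (L, Fun a ss)) t \<and> set2_tm t = {}"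
    by (auto simp: td_dom_iff)
  then obtain t where d: "(tstep (rules (domaut T)))\<^sup>*\<^sup>* (Var (L, Fun a ss)) t" and g: "set2_tm t = {}"
    by blast
  from root_decomp[OF d] g obtain rhs where r: "(L, (a, ?k), rhs) \<in> rules (domaut T)"
    and d2: "(tstep (rules (domaut T)))\<^sup>*\<^sup>* (inst rhs ss) t" by auto
  from r Fun.prems(2) obtain \<Gamma> where \<Gamma>: "\<forall>q\<in>L. \<Gamma> q \<noteq> {} \<and> \<Gamma> q \<subseteq> rhs_set T q (a, ?k)"
    and rhs: "rhs = Fun a (map (\<lambda>i. Var ({q'. \<exists>q\<in>L. \<exists>\<xi>\<in>\<Gamma> q. q' \<in> rhs_states \<xi> i}, i)) [0..<?k])"
    unfolding domaut_rule by blast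
  define Sf where "Sf i = {q'. \<exists>q\<in>L. \<exists>\<xi>\<in>\<Gamma> q. q' \<in> rhs_states \<xi> i}" for i
  have sub: "\<forall>i<?k. ss ! i \<in> td_dom (domaut T) (Sf i)"
  proof (intro allI impI)
    fix i assume i: "i < ?k"
    have "(Sf i, ss ! i) \<in> set2_tm (inst rhs ss)" using i by (force simp: rhs Sf_def set2_inst)
    from decomp[OF d2 this] g obtain t'' where "(tstep (rules (domaut T)))\<^sup>*\<^sup>* (Var (Sf i, ss ! i)) t''"
      "set2_tm t'' = {}" by auto
    moreover have "wf_tree (inalph T) (ss ! i)" using wf i nth_mem by auto
    ultimately show "ss ! i \<in> td_dom (domaut T) (Sf i)" by (auto simp: td_dom_iff)
  qed
  from \<Gamma> Fun.prems(2) obtain \<xi> where \<xi>: "\<xi> \<in> \<Gamma> p" "(p, (a, ?k), \<xi>) \<in> rules T"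
    by (auto simp: rhs_set_def)
  have "\<exists>t'. (tstep (rules T))\<^sup>*\<^sup>* (inst \<xi> ss) t' \<and> set2_tm t' \<subseteq> {}"
  proof (rule lift, intro ballI)
    fix v assume "v \<in> set2_tm (inst \<xi> ss)"
    then obtain p' j where v: "v = (p', ss ! j)" "(p', j) \<in> set2_tm \<xi>" by (auto simp: set2_inst)
    have j: "j < ?k" using wfR \<xi>(2) v(2) by fastforce
    have "p' \<in> Sf j" using \<xi>(1) v(2) Fun.prems(2) by (auto simp: Sf_def rhs_states_def)
    then have "ss ! j \<in> td_dom T p'" using Fun.hyps[of "ss ! j" "Sf j" p'] sub j nth_mem by auto
    then show "\<exists>t'. (tstep (rules T))\<^sup>*\<^sup>* (Var v) t' \<and> set2_tm t' \<subseteq> {}" using v by (auto simp: td_dom_iff)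
  qed
  then obtain t' where t': "(tstep (rules T))\<^sup>*\<^sup>* (inst \<xi> ss) t'" "set2_tm t' = {}" by blast
  have "tstep (rules T) (Var (p, Fun a ss)) (inst \<xi> ss)" using \<xi>(2) by (rule tstep.root)
  then have "(tstep (rules T))\<^sup>*\<^sup>* (Var (p, Fun a ss)) t'" using t'(1) by (rule converse_rtranclp_into_rtranclp)
  then show ?case using wf t'(2) by (auto simp: td_dom_iff)
qed

lemma DA_complete:
  assumes lhs: "\<forall>(q, a, \<xi>) \<in> rules T. q \<in> states T"
  shows "wf_tree (inalph T) (s :: ('f, 'v) tm) \<Longrightarrow> L \<subseteq> states T \<Longrightarrow> \<forall>p\<in>L. s \<in> td_dom T p \<Longrightarrow>
     s \<in> td_dom (domaut T) L"
proof (induct s arbitrary: L)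
  case (Var v) then show ?case by simp
next
  case (Fun a ss)
  let ?k = "length ss"
  have ak: "(a, ?k) \<in> inalph T" using Fun.prems(1) by simp
  have "\<forall>p\<in>L. \<exists>\<xi>. (p, (a, ?k), \<xi>) \<in> rules T \<and>
          (\<exists>t. (tstep (rules T))\<^sup>*\<^sup>* (inst \<xi> ss) t \<and> set2_tm t = {})"
  proof
    fix p assume "p \<in> L"
    then obtain t where t: "(tstep (rules T))\<^sup>*\<^sup>* (Var (p, Fun a ss)) t" "set2_tm t = {}"
      using Fun.prems(3) by (auto simp: td_dom_iff)
    from root_decomp[OF t(1)] t(2)
    show "\<exists>\<xi>. (p, (a, ?k), \<xi>) \<in> rules T \<and> (\<exists>t. (tstep (rules T))\<^sup>*\<^sup>* (inst \<xi> ss) t \<and> set2_tm t = {})"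
      by auto
  qed
  from bchoice[OF this] obtain \<Xi> where \<Xi>: "\<forall>p\<in>L. (p, (a, ?k), \<Xi> p) \<in> rules T \<and>
          (\<exists>t. (tstep (rules T))\<^sup>*\<^sup>* (inst (\<Xi> p) ss) t \<and> set2_tm t = {})" by blast
  define \<Gamma> where "\<Gamma> p = {\<Xi> p}" for p
  define Sf where "Sf i = {q'. \<exists>q\<in>L. \<exists>\<xi>\<in>\<Gamma> q. q' \<in> rhs_states \<xi> i}" for i
  have Sf: "\<forall>i<?k. ss ! i \<in> td_dom (domaut T) (Sf i)"
  proof (intro allI impI)
    fix i assume i: "i < ?k"
    have wfi: "wf_tree (inalph T) (ss ! i)" using Fun.prems(1) i nth_mem by auto
    have dom: "\<forall>q'\<in>Sf i. ss ! i \<in> td_dom T q'"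
    proof
      fix q' assume "q' \<in> Sf i"
      then obtain q where q: "q \<in> L" "(q', i) \<in> set2_tm (\<Xi> q)"
        by (auto simp: Sf_def \<Gamma>_def rhs_states_def)
      then obtain t where t: "(tstep (rules T))\<^sup>*\<^sup>* (inst (\<Xi> q) ss) t" "set2_tm t = {}" using \<Xi> by blast
      have "(q', ss ! i) \<in> set2_tm (inst (\<Xi> q) ss)" using q(2) by (force simp: set2_inst)
      from decomp[OF t(1) this] t(2) obtain t'' where
        "(tstep (rules T))\<^sup>*\<^sup>* (Var (q', ss ! i)) t''" "set2_tm t'' = {}" by auto
      then show "ss ! i \<in> td_dom T q'" using wfi by (auto simp: td_dom_iff)
    qed
    have "Sf i \<subseteq> states T"
    proof
      fix q' assume "q' \<in> Sf i"
      with dom obtain t where t: "(tstep (rules T))\<^sup>*\<^sup>* (Var (q', ss ! i)) t" "set2_tm t = {}"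
        by (auto simp: td_dom_iff)
      obtain b us where bu: "ss ! i = Fun b us" using wfi by (cases "ss ! i") auto
      from root_decomp[of "rules T" q' b us t] t bu obtain \<xi>' where "(q', (b, length us), \<xi>') \<in> rules T"
        by auto
      then show "q' \<in> states T" using lhs by fastforce
    qed
    then show "ss ! i \<in> td_dom (domaut T) (Sf i)"
      using Fun.hyps[of "ss ! i" "Sf i"] i nth_mem wfi dom by auto
  qed
  define rhs where "rhs = Fun a (map (\<lambda>i. Var (Sf i, i)) [0..<?k])"
  have r: "(L, (a, ?k), rhs) \<in> rules (domaut T)"
  proof (cases "L = {}")
    case True then have "Sf = (\<lambda>i. {})" by (auto simp: Sf_def)
    then show ?thesis using ak True by (simp add: domaut_rule rhs_def)
  next
    case False
    have "\<forall>q\<in>L. \<Gamma> q \<noteq> {} \<and> \<Gamma> q \<subseteq> rhs_set T q (a, ?k)" using \<Xi> by (auto simp: \<Gamma>_def rhs_set_def)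
    then show ?thesis using ak False Fun.prems(2) unfolding domaut_rule rhs_def Sf_def by blast
  qed
  have "\<exists>t'. (tstep (rules (domaut T)))\<^sup>*\<^sup>* (inst rhs ss) t' \<and> set2_tm t' \<subseteq> {}"
  proof (rule lift, intro ballI)
    fix v assume "v \<in> set2_tm (inst rhs ss)"
    then obtain i where "i < ?k" "v = (Sf i, ss ! i)" by (auto simp: rhs_def set2_inst)
    then show "\<exists>t'. (tstep (rules (domaut T)))\<^sup>*\<^sup>* (Var v) t' \<and> set2_tm t' \<subseteq> {}"
      using Sf by (auto simp: td_dom_iff)
  qed
  then obtain t' where t': "(tstep (rules (domaut T)))\<^sup>*\<^sup>* (inst rhs ss) t'" "set2_tm t' = {}" by blast
  have "tstep (rules (domaut T)) (Var (L, Fun a ss)) (inst rhs ss)" using r by (rule tstep.root)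
  then have "(tstep (rules (domaut T)))\<^sup>*\<^sup>* (Var (L, Fun a ss)) t'" using t'(1)
    by (rule converse_rtranclp_into_rtranclp)
  then show ?case using Fun.prems(1) t'(2) by (auto simp: td_dom_iff)
qed


definition trf :: "'p \<times> ('g, 'q \<times> nat) tm \<Rightarrow> ('q \<times> 'p) \<times> nat" where
  "trf = (\<lambda>(p', u). case u of Var (q'', i) \<Rightarrow> ((q'', p'), i) | Fun _ _ \<Rightarrow> undefined)"

lemma trf_Var[simp]: "trf (p, Var (q, i)) = ((q, p), i)"
  by (simp add: trf_def)

lemma translate_alt: "translate T p \<xi> = {map_tm id trf \<zeta> | \<zeta>. (tstep (rules T))\<^sup>*\<^sup>* (Var (p, \<xi>)) \<zeta>
   \<and> (\<forall>(p', u) \<in> set2_tm \<zeta>. \<exists>q'' i. u = Var (q'', i))}"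
  by (simp add: translate_def trf_def)

lemma domaut_idx: "\<forall>(q, (a, k), \<xi>) \<in> rules (domaut T). \<forall>(p, j) \<in> set2_tm \<xi>. j < k"
  by (auto simp: domaut_def)

lemma prod_simps[simp]: "states (prod_td T T') = states T \<times> states T'"
  "inalph (prod_td T T') = inalph T"
  by (simp_all add: prod_td_def)

lemma T1h_rule:
  assumes wf1: "wf_td T1" and r: "((q, S), (a, k), \<xi>) \<in> rules (prod_td T1 (domaut T2))"
  shows "q \<in> states T1 \<and> S \<subseteq> states T2 \<and> (\<forall>((q0, S0), j) \<in> set2_tm \<xi>. j < k)"
proof -
  from r obtain \<xi>1 \<zeta> where r1: "(q, (a, k), \<xi>1) \<in> rules T1" and S: "S \<subseteq> states T2"
    and \<xi>: "\<xi> = map_tm id trf \<zeta>" and d: "(tstep (rules (domaut T2)))\<^sup>*\<^sup>* (Var (S, \<xi>1)) \<zeta>"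
    and lf: "\<forall>(p', u) \<in> set2_tm \<zeta>. \<exists>q'' i. u = Var (q'', i)"
    by (auto simp: prod_td_def translate_alt)
  have q: "q \<in> states T1" and wr: "wf_rhs (outalph T1) (states T1) k \<xi>1"
    using wf1 r1 unfolding wf_td_def by fastforce+
  have inv: "\<forall>(p, u) \<in> set2_tm \<zeta>. set2_tm u \<subseteq> set2_tm \<xi>1"
    by (rule inv_steps[OF d domaut_idx]) simp
  have "\<forall>((q0, S0), j) \<in> set2_tm \<xi>. j < k"
  proof (clarify)
    fix q0 S0 j assume "((q0, S0), j) \<in> set2_tm \<xi>"
    then obtain p' u where pu: "(p', u) \<in> set2_tm \<zeta>" "trf (p', u) = ((q0, S0), j)"
      by (auto simp: \<xi> tm.set_map)
    with lf obtain q'' i where u: "u = Var (q'', i)" by blast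
    with pu have "q'' = q0" "i = j" by auto
    with inv pu u have "(q0, j) \<in> set2_tm \<xi>1" by fastforce
    then show "j < k" using wf_rhs_set[OF wr] by blast
  qed
  with q S show ?thesis by blast
qed

lemma T1h_lhs: "wf_td T1 \<Longrightarrow> \<forall>(p, a, \<xi>) \<in> rules (prod_td T1 (domaut T2)). p \<in> states (prod_td T1 (domaut T2))"
  using T1h_rule[of T1] by fastforce

lemma T1h_idx: "wf_td T1 \<Longrightarrow> \<forall>(p, (a, k), \<xi>) \<in> rules (prod_td T1 (domaut T2)). \<forall>(p', j) \<in> set2_tm \<xi>. j < k"
  using T1h_rule[of T1] by fastforce

lemma L_trans:
  fixes T2 :: "('q2, 'g, 'h) td" and t1 :: "('g, 'q \<times> nat) tm"
  assumes wf2: "wf_td T2"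
  shows "(tstep (rules (domaut T2)))\<^sup>*\<^sup>* (Var (S, t1)) \<zeta> \<Longrightarrow> \<forall>(p', u) \<in> set2_tm \<zeta>. \<exists>v. u = Var v \<Longrightarrow>
    q' \<in> S \<Longrightarrow> q' \<in> states T2 \<Longrightarrow>
    \<exists>\<zeta>2. (tstep (rules T2))\<^sup>*\<^sup>* (Var (q', map_tm id trf \<zeta>)) \<zeta>2 \<and>
      (\<forall>(p0, u) \<in> set2_tm \<zeta>2. \<exists>q0 S0 i. u = Var ((q0, S0), i) \<and> p0 \<in> S0 \<and> p0 \<in> states T2
         \<and> ((q0, S0), i) \<in> set2_tm (map_tm id trf \<zeta>))"
proof (induct t1 arbitrary: S \<zeta> q')
  case (Var v)
  obtain q0 i where v: "v = (q0, i)" by (cases v)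
  have \<zeta>: "\<zeta> = Var (S, Var v)" using rtranclp_Var_Var[OF Var.prems(1)] .
  show ?case
    by (rule exI[of _ "Var (q', Var ((q0, S), i))"]) (use Var.prems in \<open>simp add: \<zeta> v\<close>)
next
  case (Fun d ts)
  let ?k = "length ts"
  have "\<zeta> \<noteq> Var (S, Fun d ts)"
  proof
    assume "\<zeta> = Var (S, Fun d ts)"
    then have "(S, Fun d ts) \<in> set2_tm \<zeta>" by simp
    with Fun.prems(2) show False by fastforce
  qed
  with root_decomp[OF Fun.prems(1)] obtain rhs where
    r: "(S, (d, ?k), rhs) \<in> rules (domaut T2)" and d2: "(tstep (rules (domaut T2)))\<^sup>*\<^sup>* (inst rhs ts) \<zeta>"
    by blast
  from r Fun.prems(3) obtain \<Gamma> where \<Gamma>: "\<forall>q\<in>S. \<Gamma> q \<noteq> {} \<and> \<Gamma> q \<subseteq> rhs_set T2 q (d, ?k)"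
    and rhs: "rhs = Fun d (map (\<lambda>i. Var ({q'. \<exists>q\<in>S. \<exists>\<xi>\<in>\<Gamma> q. q' \<in> rhs_states \<xi> i}, i)) [0..<?k])"
    unfolding domaut_rule by blast
  define Sf where "Sf i = {q'. \<exists>q\<in>S. \<exists>\<xi>\<in>\<Gamma> q. q' \<in> rhs_states \<xi> i}" for i
  have "inst rhs ts = Fun d (map (\<lambda>i. Var (Sf i, ts ! i)) [0..<?k])"
    by (simp add: rhs inst_def Sf_def)
  with d2 have "(tstep (rules (domaut T2)))\<^sup>*\<^sup>* (Fun d (map (\<lambda>i. Var (Sf i, ts ! i)) [0..<?k])) \<zeta>"
    by simp
  from rtranclp_Fun[OF this] obtain \<zeta>s where \<zeta>: "\<zeta> = Fun d \<zeta>s"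
    and l: "list_all2 (tstep (rules (domaut T2)))\<^sup>*\<^sup>* (map (\<lambda>i. Var (Sf i, ts ! i)) [0..<?k]) \<zeta>s"
    by blast
  have len: "length \<zeta>s = ?k" using list_all2_lengthD[OF l] by simp
  have dj: "\<forall>j<?k. (tstep (rules (domaut T2)))\<^sup>*\<^sup>* (Var (Sf j, ts ! j)) (\<zeta>s ! j)"
    using l by (auto simp: list_all2_conv_all_nth)
  have lfj: "\<forall>j<?k. \<forall>(p', u) \<in> set2_tm (\<zeta>s ! j). \<exists>v. u = Var v"
  proof (intro allI impI)
    fix j assume "j < ?k"
    then have "\<zeta>s ! j \<in> set \<zeta>s" using len by simp
    then have "set2_tm (\<zeta>s ! j) \<subseteq> set2_tm \<zeta>" unfolding \<zeta> by auto
    then show "\<forall>(p', u) \<in> set2_tm (\<zeta>s ! j). \<exists>v. u = Var v" using Fun.prems(2) by blast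
  qed
  from \<Gamma> Fun.prems(3) obtain \<xi>2 where \<xi>2: "\<xi>2 \<in> \<Gamma> q'" "(q', (d, ?k), \<xi>2) \<in> rules T2"
    by (auto simp: rhs_set_def)
  have wr: "wf_rhs (outalph T2) (states T2) ?k \<xi>2" using wf2 \<xi>2(2) unfolding wf_td_def by fastforce
  define X where "X = map (map_tm id trf) \<zeta>s"
  have mz: "map_tm id trf \<zeta> = Fun d X" by (simp add: \<zeta> X_def)
  have lenX: "length X = ?k" by (simp add: X_def len)
  define A where "A = {(p0, u :: ('g, ('q \<times> 'q2 set) \<times> nat) tm). \<exists>q0 S0 i. u = Var ((q0, S0), i) \<and> p0 \<in> S0 \<and> p0 \<in> states T2
         \<and> ((q0, S0), i) \<in> set2_tm (map_tm id trf \<zeta>)}"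
  have "\<exists>t'. (tstep (rules T2))\<^sup>*\<^sup>* (inst \<xi>2 X) t' \<and> set2_tm t' \<subseteq> A"
  proof (rule lift, intro ballI)
    fix v assume "v \<in> set2_tm (inst \<xi>2 X)"
    then obtain p j where v: "v = (p, X ! j)" "(p, j) \<in> set2_tm \<xi>2" by (auto simp: set2_inst)
    have pj: "p \<in> states T2" "j < ?k" using wf_rhs_set[OF wr v(2)] by auto
    have pS: "p \<in> Sf j" using \<xi>2(1) v(2) Fun.prems(3) by (auto simp: Sf_def rhs_states_def)
    have "\<exists>\<zeta>2. (tstep (rules T2))\<^sup>*\<^sup>* (Var (p, map_tm id trf (\<zeta>s ! j))) \<zeta>2 \<and>
      (\<forall>(p0, u) \<in> set2_tm \<zeta>2. \<exists>q0 S0 i. u = Var ((q0, S0), i) \<and> p0 \<in> S0 \<and> p0 \<in> states T2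
         \<and> ((q0, S0), i) \<in> set2_tm (map_tm id trf (\<zeta>s ! j)))"
    proof -
      have l': "\<forall>(p', u) \<in> set2_tm (\<zeta>s ! j). \<exists>v. u = Var v" using lfj pj(2) by blast
      show ?thesis
        by (rule Fun.hyps[OF nth_mem[OF pj(2)] dj[rule_format, OF pj(2)] l' pS pj(1)])
    qed
    then obtain \<zeta>2 where z2: "(tstep (rules T2))\<^sup>*\<^sup>* (Var (p, map_tm id trf (\<zeta>s ! j))) \<zeta>2"
      "\<forall>(p0, u) \<in> set2_tm \<zeta>2. \<exists>q0 S0 i. u = Var ((q0, S0), i) \<and> p0 \<in> S0 \<and> p0 \<in> states T2
         \<and> ((q0, S0), i) \<in> set2_tm (map_tm id trf (\<zeta>s ! j))" by blast
    have sub: "set2_tm (map_tm id trf (\<zeta>s ! j)) \<subseteq> set2_tm (map_tm id trf \<zeta>)"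
    proof -
      have "\<zeta>s ! j \<in> set \<zeta>s" using pj(2) len by simp
      then show ?thesis unfolding \<zeta> by (auto simp: tm.set_map)
    qed
    have "set2_tm \<zeta>2 \<subseteq> A"
    proof (clarify)
      fix p0 u assume "(p0, u) \<in> set2_tm \<zeta>2"
      with z2(2) obtain q0 S0 i where "u = Var ((q0, S0), i)" "p0 \<in> S0" "p0 \<in> states T2"
        "((q0, S0), i) \<in> set2_tm (map_tm id trf (\<zeta>s ! j))" by blast
      then show "(p0, u) \<in> A" using sub unfolding A_def by blast
    qed
    moreover have "X ! j = map_tm id trf (\<zeta>s ! j)" using pj(2) len by (simp add: X_def)
    ultimately show "\<exists>t'. (tstep (rules T2))\<^sup>*\<^sup>* (Var v) t' \<and> set2_tm t' \<subseteq> A"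
      using z2(1) v(1) by auto
  qed
  then obtain t' where t': "(tstep (rules T2))\<^sup>*\<^sup>* (inst \<xi>2 X) t'" "set2_tm t' \<subseteq> A" by blast
  have "(q', (d, length X), \<xi>2) \<in> rules T2" using \<xi>2(2) lenX by simp
  then have "tstep (rules T2) (Var (q', Fun d X)) (inst \<xi>2 X)" by (rule tstep.root)
  then have "(tstep (rules T2))\<^sup>*\<^sup>* (Var (q', map_tm id trf \<zeta>)) t'" unfolding mz using t'(1)
    by (rule converse_rtranclp_into_rtranclp)
  moreover have "\<forall>(p0, u) \<in> set2_tm t'. \<exists>q0 S0 i. u = Var ((q0, S0), i) \<and> p0 \<in> S0 \<and> p0 \<in> states T2
         \<and> ((q0, S0), i) \<in> set2_tm (map_tm id trf \<zeta>)"
    using t'(2) unfolding A_def by blast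
  ultimately show ?case by blast
qed


definition cT :: "('q, 'f, 'g) td \<Rightarrow> ('f, 'v) tm \<Rightarrow> 'q set" where
  "cT T t = {p \<in> states T. t \<in> td_dom T p}"

fun rl :: "(('f, 'v) tm \<Rightarrow> 'l) \<Rightarrow> ('f, 'v) tm \<Rightarrow> ('f \<times> 'l list, 'v) tm" where
  "rl c (Fun a ss) = Fun (a, map c ss) (map (rl c) ss)"
| "rl c (Var v) = Var v"

lemma la_base_simps[simp]: "rules (la_base M) = lrules M"
  "inalph (la_base M) = {((a, ls), k) | a ls k. (a, k) \<in> linalph M \<and> length ls = k
                                       \<and> set ls \<subseteq> states (lookahead M)}"
  by (simp_all add: la_base_def)

lemma constrM_simps[simp]: "lookahead (constrM T1 T2) = domaut (prod_td T1 (domaut T2))"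
  "linalph (constrM T1 T2) = inalph T1"
  by (simp_all add: constrM_def Let_def)

lemma lrules_mem: "(((q, S), q'), ((a, ls), k), \<gamma>) \<in> lrules (constrM T1 T2) \<longleftrightarrow>
  (\<exists>\<xi>. ((q, S), (a, k), \<xi>) \<in> rules (prod_td T1 (domaut T2)) \<and> q' \<in> states T2 \<and> q' \<in> S
     \<and> \<gamma> \<in> translate T2 q' \<xi> \<and> (\<forall>(((q0, S0), p0), i) \<in> set2_tm \<gamma>. p0 \<in> S0) \<and> length ls = k
     \<and> (\<forall>i<k. ls ! i \<in> states (domaut (prod_td T1 (domaut T2))) \<and> rhs_states \<xi> i \<subseteq> ls ! i))"
  unfolding constrM_def Let_def by auto

lemma dom_state: "\<forall>(q, a, \<xi>) \<in> rules T. q \<in> states T \<Longrightarrow> s \<in> td_dom T p \<Longrightarrow> p \<in> states T"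
proof -
  assume lhs: "\<forall>(q, a, \<xi>) \<in> rules T. q \<in> states T" and s: "s \<in> td_dom T p"
  from s obtain t where t: "(tstep (rules T))\<^sup>*\<^sup>* (Var (p, s)) t" "set2_tm t = {}" and wf: "wf_tree (inalph T) s"
    by (auto simp: td_dom_iff)
  obtain b us where bu: "s = Fun b us" using wf by (cases s) auto
  from root_decomp[of "rules T" p b us t] t bu obtain \<xi>' where "(p, (b, length us), \<xi>') \<in> rules T"
    by auto
  then show "p \<in> states T" using lhs by fastforce
qed

lemma main_sub:
  fixes T1 :: "('q1, 'f, 'g) td" and T2 :: "('q2, 'g, 'h) td" and s :: "('f, 'v) tm"
  assumes wf1: "wf_td T1"
  shows "s \<in> la_dom (constrM T1 T2) ((q, S), q') \<Longrightarrow> s \<in> td_dom (prod_td T1 (domaut T2)) (q, S)"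
proof -
  let ?T = "prod_td T1 (domaut T2)"
  assume "s \<in> la_dom (constrM T1 T2) ((q, S), q')"
  then obtain s' where wf: "wf_tree (inalph T1) s" and rel: "relab (domaut ?T) s s'"
    and d: "s' \<in> td_dom (la_base (constrM T1 T2)) ((q, S), q')"
    by (auto simp: la_dom_def)
  from rel obtain a ss ls ss' where s: "s = Fun a ss" and s': "s' = Fun (a, ls) ss'"
    and lls: "length ls = length ss" and lab: "\<forall>i<length ss. ls ! i \<in> states (domaut ?T) \<and> ss ! i \<in> td_dom (domaut ?T) (ls ! i)"
    and la: "list_all2 (relab (domaut ?T)) ss ss'"
    by (cases rule: relab.cases) blast
  have lss: "length ss' = length ss" using list_all2_lengthD[OF la] by simp
  from d obtain t where t: "(tstep (lrules (constrM T1 T2)))\<^sup>*\<^sup>* (Var (((q, S), q'), Fun (a, ls) ss')) t"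
    "set2_tm t = {}" by (auto simp: td_dom_iff s')
  from root_decomp[OF t(1)] t(2) obtain \<gamma> where
    "(((q, S), q'), ((a, ls), length ss'), \<gamma>) \<in> lrules (constrM T1 T2)" by auto
  then obtain \<xi> where r: "((q, S), (a, length ss), \<xi>) \<in> rules ?T"
    and sub: "\<forall>i<length ss. rhs_states \<xi> i \<subseteq> ls ! i"
    unfolding lrules_mem lss by blast
  have idx: "\<forall>(p, (a, k), \<xi>) \<in> rules ?T. \<forall>(p', j) \<in> set2_tm \<xi>. j < k" by (rule T1h_idx[OF wf1])
  have "\<exists>t'. (tstep (rules ?T))\<^sup>*\<^sup>* (inst \<xi> ss) t' \<and> set2_tm t' \<subseteq> {}"
  proof (rule lift, intro ballI)
    fix v assume "v \<in> set2_tm (inst \<xi> ss)"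
    then obtain p j where v: "v = (p, ss ! j)" "(p, j) \<in> set2_tm \<xi>" by (auto simp: set2_inst)
    have j: "j < length ss" using idx r v(2) by fastforce
    have "p \<in> ls ! j" using sub j v(2) by (auto simp: rhs_states_def)
    then have "ss ! j \<in> td_dom ?T p" using DA_sound[OF idx] lab j by blast
    then show "\<exists>t'. (tstep (rules ?T))\<^sup>*\<^sup>* (Var v) t' \<and> set2_tm t' \<subseteq> {}" using v by (auto simp: td_dom_iff)
  qed
  then obtain t' where t': "(tstep (rules ?T))\<^sup>*\<^sup>* (inst \<xi> ss) t'" "set2_tm t' = {}" by blast
  have "tstep (rules ?T) (Var ((q, S), Fun a ss)) (inst \<xi> ss)" using r by (rule tstep.root)
  then have "(tstep (rules ?T))\<^sup>*\<^sup>* (Var ((q, S), Fun a ss)) t'" using t'(1)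
    by (rule converse_rtranclp_into_rtranclp)
  then show ?thesis using wf t'(2) s by (auto simp: td_dom_iff)
qed


lemma main_sup:
  fixes T1 :: "('q1, 'f, 'g) td" and T2 :: "('q2, 'g, 'h) td" and s :: "('f, 'v) tm"
  assumes wf1: "wf_td T1" and wf2: "wf_td T2"
  shows "s \<in> td_dom (prod_td T1 (domaut T2)) (q, S) \<Longrightarrow> q' \<in> S \<Longrightarrow> q' \<in> states T2 \<Longrightarrow>
    \<exists>t. (tstep (lrules (constrM T1 T2)))\<^sup>*\<^sup>* (Var (((q, S), q'), rl (cT (prod_td T1 (domaut T2))) s)) t
        \<and> set2_tm t = {}"
proof (induct s arbitrary: q S q')
  case (Var v) then show ?case by (simp add: td_dom_iff)
next
  case (Fun a ss)
  let ?T = "prod_td T1 (domaut T2)"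
  let ?k = "length ss"
  let ?c = "cT ?T :: ('f, 'v) tm \<Rightarrow> _"
  from Fun.prems(1) obtain t where wf: "wf_tree (inalph T1) (Fun a ss)"
    and t: "(tstep (rules ?T))\<^sup>*\<^sup>* (Var ((q, S), Fun a ss)) t" "set2_tm t = {}"
    by (auto simp: td_dom_iff)
  from root_decomp[OF t(1)] t(2) obtain \<xi> where r: "((q, S), (a, ?k), \<xi>) \<in> rules ?T"
    and d: "(tstep (rules ?T))\<^sup>*\<^sup>* (inst \<xi> ss) t" by auto
  from r obtain \<xi>1 \<zeta> where S: "S \<subseteq> states T2"
    and \<xi>: "\<xi> = map_tm id trf \<zeta>" and d\<zeta>: "(tstep (rules (domaut T2)))\<^sup>*\<^sup>* (Var (S, \<xi>1)) \<zeta>"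
    and lf: "\<forall>(p', u) \<in> set2_tm \<zeta>. \<exists>q'' i. u = Var (q'', i)"
    by (auto simp: prod_td_def translate_alt)
  have lf': "\<forall>(p', u) \<in> set2_tm \<zeta>. \<exists>v. u = Var v" using lf by fastforce
  from L_trans[OF wf2 d\<zeta> lf' Fun.prems(2,3)] obtain \<zeta>2 where
    d2: "(tstep (rules T2))\<^sup>*\<^sup>* (Var (q', map_tm id trf \<zeta>)) \<zeta>2" and
    P2: "\<forall>(p0, u) \<in> set2_tm \<zeta>2. \<exists>q0 S0 i. u = Var ((q0, S0), i) \<and> p0 \<in> S0 \<and> p0 \<in> states T2
         \<and> ((q0, S0), i) \<in> set2_tm (map_tm id trf \<zeta>)" by blast
  define \<gamma> where "\<gamma> = map_tm id trf \<zeta>2"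
  have \<gamma>tr: "\<gamma> \<in> translate T2 q' \<xi>"
  proof -
    have "\<forall>(p', u) \<in> set2_tm \<zeta>2. \<exists>q'' i. u = Var (q'', i)" using P2 by fastforce
    then show ?thesis unfolding translate_alt \<gamma>_def using d2 \<xi> by blast
  qed
  have \<gamma>leaf: "\<forall>(st, i) \<in> set2_tm \<gamma>. \<exists>q0 S0 p0. st = ((q0, S0), p0) \<and> p0 \<in> S0 \<and> p0 \<in> states T2
      \<and> ((q0, S0), i) \<in> set2_tm \<xi>"
  proof (clarify)
    fix st i assume "(st, i) \<in> set2_tm \<gamma>"
    then obtain p0 u where pu: "(p0, u) \<in> set2_tm \<zeta>2" "trf (p0, u) = (st, i)"
      by (auto simp: \<gamma>_def tm.set_map)
    from P2 pu(1) obtain q0 S0 i' where "u = Var ((q0, S0), i')" "p0 \<in> S0" "p0 \<in> states T2"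
      "((q0, S0), i') \<in> set2_tm (map_tm id trf \<zeta>)" by blast
    with pu(2) \<xi> show "\<exists>q0 S0 p0. st = ((q0, S0), p0) \<and> p0 \<in> S0 \<and> p0 \<in> states T2
      \<and> ((q0, S0), i) \<in> set2_tm \<xi>" by auto
  qed
  have \<gamma>cond: "\<forall>(((q0, S0), p0), i) \<in> set2_tm \<gamma>. p0 \<in> S0"
    using \<gamma>leaf by fastforce
  define ls where "ls = map ?c ss"
  have lhs: "\<forall>(p, a, \<xi>) \<in> rules ?T. p \<in> states ?T" by (rule T1h_lhs[OF wf1])
  have idx: "\<forall>(p, (a, k), \<xi>) \<in> rules ?T. \<forall>(p', j) \<in> set2_tm \<xi>. j < k" by (rule T1h_idx[OF wf1])
  have domi: "ss ! i \<in> td_dom ?T p" if "(p, i) \<in> set2_tm \<xi>" for p i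
  proof -
    have i: "i < ?k" using idx r that by fastforce
    have "(p, ss ! i) \<in> set2_tm (inst \<xi> ss)" using that by (force simp: set2_inst)
    from decomp[OF d this] t(2) obtain t'' where "(tstep (rules ?T))\<^sup>*\<^sup>* (Var (p, ss ! i)) t''"
      "set2_tm t'' = {}" by auto
    moreover have "wf_tree (inalph T1) (ss ! i)" using wf i nth_mem by auto
    ultimately show ?thesis by (auto simp: td_dom_iff)
  qed
  have lsc: "\<forall>i<?k. ls ! i \<in> states (domaut ?T) \<and> rhs_states \<xi> i \<subseteq> ls ! i"
  proof (intro allI impI)
    fix i assume i: "i < ?k"
    have "ls ! i \<in> states (domaut ?T)" using i by (auto simp: ls_def cT_def)
    moreover have "rhs_states \<xi> i \<subseteq> ls ! i"
    proof
      fix p assume "p \<in> rhs_states \<xi> i"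
      then have pi: "(p, i) \<in> set2_tm \<xi>" by (simp add: rhs_states_def)
      have dd: "ss ! i \<in> td_dom ?T p" using domi[OF pi] .
      have "p \<in> states ?T" using dom_state[OF lhs dd] .
      with dd show "p \<in> ls ! i" using i by (simp add: ls_def cT_def)
    qed
    ultimately show "ls ! i \<in> states (domaut ?T) \<and> rhs_states \<xi> i \<subseteq> ls ! i" by blast
  qed
  have rM: "(((q, S), q'), ((a, ls), ?k), \<gamma>) \<in> lrules (constrM T1 T2)"
    unfolding lrules_mem
    by (rule exI[of _ \<xi>]) (use r Fun.prems(2,3) \<gamma>tr \<gamma>cond lsc in \<open>simp add: ls_def\<close>)
  define X where "X = map (rl ?c) ss"
  have "\<exists>t'. (tstep (lrules (constrM T1 T2)))\<^sup>*\<^sup>* (inst \<gamma> X) t' \<and> set2_tm t' \<subseteq> {}"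
  proof (rule lift, intro ballI)
    fix v assume "v \<in> set2_tm (inst \<gamma> X)"
    then obtain st i where v: "v = (st, X ! i)" "(st, i) \<in> set2_tm \<gamma>" by (auto simp: set2_inst)
    from \<gamma>leaf v(2) obtain q0 S0 p0 where st: "st = ((q0, S0), p0)" "p0 \<in> S0" "p0 \<in> states T2"
      "((q0, S0), i) \<in> set2_tm \<xi>" by blast
    have i: "i < ?k" using idx r st(4) by fastforce
    have dm: "ss ! i \<in> td_dom ?T (q0, S0)" using domi[OF st(4)] .
    have "\<exists>t. (tstep (lrules (constrM T1 T2)))\<^sup>*\<^sup>* (Var (((q0, S0), p0), rl ?c (ss ! i))) t \<and> set2_tm t = {}"
      by (rule Fun.hyps[OF nth_mem[OF i] dm st(2) st(3)])
    moreover have "X ! i = rl ?c (ss ! i)" using i by (simp add: X_def)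
    ultimately show "\<exists>t'. (tstep (lrules (constrM T1 T2)))\<^sup>*\<^sup>* (Var v) t' \<and> set2_tm t' \<subseteq> {}"
      using v st(1) by auto
  qed
  then obtain t' where t': "(tstep (lrules (constrM T1 T2)))\<^sup>*\<^sup>* (inst \<gamma> X) t'" "set2_tm t' = {}" by blast
  have "(((q, S), q'), ((a, ls), length X), \<gamma>) \<in> lrules (constrM T1 T2)" using rM by (simp add: X_def)
  then have "tstep (lrules (constrM T1 T2)) (Var (((q, S), q'), Fun (a, ls) X)) (inst \<gamma> X)"
    by (rule tstep.root)
  then have "(tstep (lrules (constrM T1 T2)))\<^sup>*\<^sup>* (Var (((q, S), q'), Fun (a, ls) X)) t'" using t'(1)
    by (rule converse_rtranclp_into_rtranclp)
  moreover have "rl ?c (Fun a ss) = Fun (a, ls) X" by (simp add: ls_def X_def)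
  ultimately show ?case using t'(2) by auto
qed

lemma rl_relab:
  fixes T1 :: "('q1, 'f, 'g) td" and T2 :: "('q2, 'g, 'h) td" and s :: "('f, 'v) tm"
  assumes wf1: "wf_td T1"
  shows "wf_tree (inalph T1) s \<Longrightarrow> relab (domaut (prod_td T1 (domaut T2))) s (rl (cT (prod_td T1 (domaut T2))) s)
     \<and> wf_tree (inalph (la_base (constrM T1 T2))) (rl (cT (prod_td T1 (domaut T2))) s)"
proof (induct s)
  case (Var v) then show ?case by simp
next
  case (Fun a ss)
  let ?T = "prod_td T1 (domaut T2)"
  let ?c = "cT ?T :: ('f, 'v) tm \<Rightarrow> _"
  have lhs: "\<forall>(p, a, \<xi>) \<in> rules ?T. p \<in> states ?T" by (rule T1h_lhs[OF wf1])
  have wfs: "\<forall>x\<in>set ss. wf_tree (inalph T1) x" using Fun.prems by simp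
  have IH: "\<forall>x\<in>set ss. relab (domaut ?T) x (rl ?c x) \<and> wf_tree (inalph (la_base (constrM T1 T2))) (rl ?c x)"
    using Fun.hyps wfs by blast
  have "\<forall>i<length ss. map ?c ss ! i \<in> states (domaut ?T) \<and> ss ! i \<in> td_dom (domaut ?T) (map ?c ss ! i)"
  proof (intro allI impI conjI)
    fix i assume i: "i < length ss"
    show "map ?c ss ! i \<in> states (domaut ?T)" using i by (auto simp: cT_def)
    have "?c (ss ! i) \<subseteq> states ?T" by (auto simp: cT_def)
    moreover have "\<forall>p\<in>?c (ss ! i). ss ! i \<in> td_dom ?T p" by (auto simp: cT_def)
    moreover have "wf_tree (inalph ?T) (ss ! i)" using wfs i by simp
    ultimately have "ss ! i \<in> td_dom (domaut ?T) (?c (ss ! i))" using DA_complete[OF lhs] by blast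
    then show "ss ! i \<in> td_dom (domaut ?T) (map ?c ss ! i)" using i by simp
  qed
  moreover have "list_all2 (relab (domaut ?T)) ss (map (rl ?c) ss)"
    using IH by (auto simp: list_all2_conv_all_nth)
  ultimately have "relab (domaut ?T) (Fun a ss) (Fun (a, map ?c ss) (map (rl ?c) ss))"
    by (intro relab.intros) auto
  moreover have "wf_tree (inalph (la_base (constrM T1 T2))) (Fun (a, map ?c ss) (map (rl ?c) ss))"
    using Fun.prems IH by (auto simp: cT_def)
  ultimately show ?case by simp
qed

theorem lemma16:
  fixes T1 :: "('q1, 'f, 'g) td" and T2 :: "('q2, 'g, 'h) td"
  assumes "wf_td T1" and "wf_td T2" and "outalph T1 = inalph T2"
    and "(q1, S) \<in> states (prod_td T1 (domaut T2))"
    and "q2 \<in> states T2" and "q2 \<in> S"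
  shows "(la_dom (constrM T1 T2) ((q1, S), q2) :: ('f, 'v) tm set)
           = td_dom (prod_td T1 (domaut T2)) (q1, S)"
proof
  show "(la_dom (constrM T1 T2) ((q1, S), q2) :: ('f, 'v) tm set) \<subseteq> td_dom (prod_td T1 (domaut T2)) (q1, S)"
    by (intro subsetI) (rule main_sub[OF assms(1)])
next
  show "td_dom (prod_td T1 (domaut T2)) (q1, S) \<subseteq> (la_dom (constrM T1 T2) ((q1, S), q2) :: ('f, 'v) tm set)"
  proof
    fix s :: "('f, 'v) tm"
    assume s: "s \<in> td_dom (prod_td T1 (domaut T2)) (q1, S)"
    then have wf: "wf_tree (inalph T1) s" by (simp add: td_dom_iff)
    from main_sup[OF assms(1,2) s assms(6,5)] obtain t where
      "(tstep (lrules (constrM T1 T2)))\<^sup>*\<^sup>* (Var (((q1, S), q2), rl (cT (prod_td T1 (domaut T2))) s)) t"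
      "set2_tm t = {}" by blast
    moreover note rl_relab[OF assms(1) wf, of T2]
    ultimately show "s \<in> la_dom (constrM T1 T2) ((q1, S), q2)"
      unfolding la_dom_def td_dom_iff using wf by auto
  qed
qed


end
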